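(* Let $F(x)=\sum_{n\ge 1} f(n)x^n$ be a formal power series with $f(1)\neq 0$ and composita $F^{\Delta}(n,k)$ (so $F^{\Delta}(1,1)=f(1)$), and let $A(x)$ be its reverse (compositional inverse) series, i.e. the formal power series with $A(0)=0$ and $F(A(x))=x$. Then the composita of $A$ is, for $n\ge m\ge 1$, $$A^{\Delta}(n,m)=\begin{cases}\dfrac{1}{F^{\Delta}(1,1)^n}, & n=m,\\[6pt] \dfrac{m}{n\,F^{\Delta}(1,1)^n}\displaystyle\sum_{k=1}^{n-m}\binom{n+k-1}{n-1}\sum_{j=1}^{k}\frac{(-1)^j}{F^{\Delta}(1,1)^j}\binom{k}{j}F^{\Delta}(n-m+j,j), & n>m.\end{cases}$$
   Context: All generating functions are formal power series in $x$. For a power series $F(x)=\sum_{n\ge 1} f(n)x^n$ with zero constant term, its composita is the two-variable function $F^{\Delta}(n,k)$ ($n\ge k\ge 1$) defined by $F^{\Delta}(n,k)=\sum_{\lambda_1+\cdots+\lambda_k=n}f(\lambda_1)f(\lambda_2)\cdots f(\lambda_k)$, where the sum runs over all compositions of $n$ into exactly $k$ positive integer parts; equivalently $[F(x)]^k=\sum_{n\ge k}F^{\Delta}(n,k)x^n$. *)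

theory Defs
  imports "HOL-Computational_Algebra.Formal_Power_Series"
begin

definition compositions :: "nat \<Rightarrow> nat \<Rightarrow> nat list set" where
  "compositions n k = {ls. length ls = k \<and> (\<forall>x\<in>set ls. 0 < x) \<and> sum_list ls = n}"

definition composita :: "'a::comm_ring_1 fps \<Rightarrow> nat \<Rightarrow> nat \<Rightarrow> 'a" where
  "composita F n k = (\<Sum>ls\<in>compositions n k. prod_list (map (fps_nth F) ls))"

end

theory Submission
  imports Defs "HOL-Computational_Algebra.Formal_Laurent_Series"
begin
unbundle fps_syntax


lemma compositions_0: "compositions n 0 = (if n = 0 then {[]} else {})"
  by (auto simp: compositions_def)

lemma compositions_Suc:
  "compositions n (Suc k) = (\<Union>l\<in>{1..n}. (#) l ` compositions (n-l) k)"
proof (intro equalityI subsetI)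
  fix ls assume "ls \<in> compositions n (Suc k)"
  then obtain l xs where ls: "ls = l # xs" "length xs = k" "0 < l" "\<forall>x\<in>set xs. 0 < x" "l + sum_list xs = n"
    by (cases ls) (auto simp: compositions_def)
  then show "ls \<in> (\<Union>l\<in>{1..n}. (#) l ` compositions (n-l) k)"
    by (auto simp: compositions_def intro!: bexI[of _ l])
qed (auto simp: compositions_def)

lemma finite_compositions: "finite (compositions n k)"
  by (induction k arbitrary: n) (auto simp: compositions_0 compositions_Suc)

lemma composita_power:
  fixes F :: "'a::comm_ring_1 fps"
  assumes "fps_nth F 0 = 0"
  shows "composita F n k = (F^k) $ n"
proof (induction k arbitrary: n)
  case 0
  then show ?case by (simp add: composita_def compositions_0)
next
  case (Suc k)
  have "composita F n (Suc k) = (\<Sum>l\<in>{1..n}. \<Sum>ls\<in>(#) l ` compositions (n-l) k. prod_list (map (fps_nth F) ls))"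
    unfolding composita_def compositions_Suc
    by (rule sum.UNION_disjoint) (auto simp: finite_compositions)
  also have "\<dots> = (\<Sum>l\<in>{1..n}. F $ l * composita F (n-l) k)"
    by (auto simp: sum.reindex composita_def sum_distrib_left intro!: sum.cong)
  also have "\<dots> = (\<Sum>l\<in>{1..n}. F $ l * (F^k) $ (n-l))" using Suc by simp
  also have "\<dots> = (\<Sum>l=0..n. F $ l * (F^k) $ (n-l))"
    using assms by (simp add: sum.atLeast_Suc_atMost)
  also have "\<dots> = (F^Suc k) $ n" by (simp add: fps_mult_nth)
  finally show ?case .
qed



lemma fps_trunc_decomp:
  fixes B :: "'a::comm_ring_1 fps"
  shows "B = (\<Sum>k=0..N. fps_const (B$k) * fps_X^k) + fps_shift (Suc N) B * fps_X^(Suc N)"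
proof (rule fps_ext)
  fix i
  have s: "(\<Sum>k=0..N. fps_const (B$k) * fps_X^k) $ i = (if i \<le> N then B $ i else 0)"
    by (simp add: fps_sum_nth fps_X_power_nth if_distrib[of "\<lambda>x. _ * x"] sum.delta cong: if_cong)
  show "B $ i = ((\<Sum>k=0..N. fps_const (B$k) * fps_X^k) + fps_shift (Suc N) B * fps_X^(Suc N)) $ i"
    by (simp add: s fps_X_power_mult_right_nth del: power_Suc)
qed

lemma compose_decomp:
  fixes B F :: "'a::field_char_0 fps"
  assumes F0: "F$0 = 0"
  shows "B oo F = (\<Sum>k=0..N. fps_const (B$k) * F^k) + F^(Suc N) * (fps_shift (Suc N) B oo F)"
proof -
  have "B oo F = ((\<Sum>k=0..N. fps_const (B$k) * fps_X^k) + fps_shift (Suc N) B * fps_X^(Suc N)) oo F"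
    using fps_trunc_decomp[of B N] by simp
  also have "\<dots> = (\<Sum>k=0..N. fps_const (B$k) * F^k) + F^(Suc N) * (fps_shift (Suc N) B oo F)"
    by (simp add: fps_compose_add_distrib fps_compose_sum_distrib fps_compose_mult_distrib[OF F0]
        fps_compose_power[OF F0, symmetric] F0 mult.commute)
  finally show ?thesis .
qed

lemma fls_deriv_inverse_field:
  fixes f :: "'a::field fls"
  assumes "f \<noteq> 0"
  shows "fls_deriv (inverse f) = - fls_deriv f * inverse f ^ 2"
proof -
  have "fls_deriv (f * inverse f) = 0" using assms by simp
  hence "fls_deriv f * inverse f + f * fls_deriv (inverse f) = 0" by (simp add: add.commute)
  hence "inverse f * (fls_deriv f * inverse f + f * fls_deriv (inverse f)) = 0" by simp
  moreover have "\<And>y. f * (inverse f * y) = y" using assms by (simp add: mult.assoc[symmetric])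
  ultimately show ?thesis using assms by (simp add: algebra_simps power2_eq_square eq_neg_iff_add_eq_0)
qed

lemma res_lemma:
  fixes f :: "'a::field_char_0 fls"
  assumes sd: "fls_subdegree f = 1" and j: "j \<ge> 1"
  shows "fls_residue (fls_deriv f * inverse f ^ j) = (if j = 1 then 1 else 0)"
proof (cases "j = 1")
  case True
  then show ?thesis using fls_residue_deriv_times_inverse_eq_subdegree(1)[of f] sd by simp
next
  case False
  have f0: "f \<noteq> 0" using sd by auto
  define p where "p = j - 1"
  have p: "p \<ge> 1" "j = Suc p" using False j by (auto simp: p_def)
  have "fls_deriv (inverse f ^ p) = of_nat p * inverse f ^ (p-1) * (- fls_deriv f * inverse f ^ 2)"
    by (simp add: fls_deriv_power fls_deriv_inverse_field[OF f0])
  also have "\<dots> = - (of_nat p * (fls_deriv f * inverse f ^ j))"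
    using p by (cases p) (auto simp: algebra_simps power2_eq_square)
  finally have d: "fls_deriv (inverse f ^ p) = - (of_nat p * (fls_deriv f * inverse f ^ j))" .
  have c: "of_nat p * fls_const (inverse (of_nat p)) = (1::'a fls)"
    using p by (simp add: fls_of_nat fls_const_mult_const)
  have eq: "fls_deriv f * inverse f ^ j = - fls_const (inverse (of_nat p)) * fls_deriv (inverse f ^ p)"
    unfolding d by (simp add: mult.assoc[symmetric] mult.commute[of "fls_const _"] c)
  show ?thesis using False by (simp only: eq fls_residue_fls_const_times mult_minus_left) simp
qed

lemma fps_to_fls_sum: "fps_to_fls (sum g S) = (\<Sum>x\<in>S. fps_to_fls (g x))"
  by (induction S rule: infinite_finite_induct) auto

lemma fls_residue_sum: "fls_residue (sum g S) = (\<Sum>x\<in>S. fls_residue (g x))"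
  by (induction S rule: infinite_finite_induct) (auto simp del: fls_residue_def simp: fls_residue_add, simp_all)

lemma lagrange:
  fixes F A :: "'a::field_char_0 fps"
  assumes F0: "F$0 = 0" and F1: "F$1 \<noteq> 0" and A0: "A$0 = 0" and inv: "F oo A = fps_X"
    and m: "1 \<le> m" and n: "m \<le> n"
  shows "of_nat n * (A^m)$n = of_nat m * (inverse (fps_shift 1 F) ^ n) $ (n-m)"
proof -
  have "fps_inv F = fps_inv F oo (F oo A)" using inv by simp
  also have "\<dots> = (fps_inv F oo F) oo A" by (rule fps_compose_assoc[OF A0 F0])
  also have "\<dots> = A" using fps_inv[OF F0 F1] A0 by simp
  finally have AF: "A oo F = fps_X" using fps_inv[OF F0 F1] by simp
  define c where "c k = (A^m)$k" for k
  define T where "T = fps_shift (Suc n) (A^m) oo F"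
  have "fps_X^m = A^m oo F" using fps_compose_power[OF F0, of A m] AF by simp
  also have "\<dots> = (\<Sum>k=0..n. fps_const (c k) * F^k) + F^(Suc n) * T"
    unfolding c_def T_def by (rule compose_decomp[OF F0])
  finally have X: "fps_X^m = (\<Sum>k=0..n. fps_const (c k) * F^k) + F^(Suc n) * T" .
  define P where "P k = fps_const (c k * of_nat k) * fps_deriv F * F^(k-1)" for k
  define Q where "Q = fps_const (of_nat (Suc n)) * fps_deriv F * T + F * fps_deriv T"
  have dX: "fps_deriv ((fps_X::'a fps)^m) = fps_const (of_nat m) * fps_X^(m-1)"
    by (simp only: fps_deriv_power) simp
  have dS: "fps_deriv (\<Sum>k=0..n. fps_const (c k) * F^k) = (\<Sum>k=0..n. P k)"
    by (simp add: fps_deriv_sum P_def fps_deriv_power algebra_simps flip: fps_const_mult)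
  have d1: "fps_deriv (F^Suc n) = fps_const (of_nat (Suc n)) * fps_deriv F * F^n"
    by (simp only: fps_deriv_power) simp
  have dR: "fps_deriv (F^Suc n * T) = F^n * Q"
    unfolding fps_deriv_mult d1 Q_def by (simp add: algebra_simps)
  have D: "fps_const (of_nat m) * fps_X^(m-1) = (\<Sum>k=0..n. P k) + F^n * Q"
    using arg_cong[OF X, of fps_deriv] dX dS dR by simp
  define f where "f = fps_to_fls F"
  define iF where "iF = inverse f"
  have sdF: "subdegree F = 1" by (rule subdegreeI) (use F0 F1 in auto)
  have sdf: "fls_subdegree f = 1" by (simp add: f_def fls_subdegree_fls_to_fps sdF)
  have f0: "f \<noteq> 0" using sdf by auto
  have fd: "fls_deriv f = fps_to_fls (fps_deriv F)" by (simp add: f_def fls_deriv_fps_to_fls)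
  have fn: "f^n * iF^n = 1" using f0 by (simp add: iF_def power_mult_distrib[symmetric])
  have L: "fls_const (of_nat m) * fls_X^(m-1) * iF^n = (\<Sum>k=0..n. fps_to_fls (P k) * iF^n) + fps_to_fls Q"
  proof -
    have "fls_const (of_nat m) * fls_X^(m-1) * iF^n = fps_to_fls (fps_const (of_nat m) * fps_X^(m-1)) * iF^n"
      by (simp add: fls_times_fps_to_fls fps_to_fls_power)
    also have "\<dots> = (\<Sum>k=0..n. fps_to_fls (P k) * iF^n) + fps_to_fls Q * (f^n * iF^n)"
      unfolding D by (simp add: fls_times_fps_to_fls fps_to_fls_power fps_to_fls_sum sum_distrib_right
          algebra_simps f_def sum_distrib_left)
    finally show ?thesis using fn by simp
  qed
  have Pk: "fls_residue (fps_to_fls (P k) * iF^n) = (if k = n then c n * of_nat n else 0)"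
    if k: "k \<in> {0..n}" for k
  proof (cases "k = 0")
    case True
    then show ?thesis using m n by (simp add: P_def)
  next
    case False
    have e: "k - 1 + (n - k + 1) = n" using k False by auto
    have "iF^n = iF^(k-1) * iF^(n-k+1)" unfolding power_add[symmetric] e ..
    hence "f^(k-1) * iF^n = (f*iF)^(k-1) * iF^(n-k+1)"
      by (simp only: power_mult_distrib mult.assoc)
    moreover have "f * iF = 1" using f0 by (simp add: iF_def)
    ultimately have "f^(k-1) * iF^n = iF^(n-k+1)" by (simp only: power_one mult_1_left)
    moreover have "fps_to_fls (P k) = fls_const (c k * of_nat k) * fls_deriv f * f^(k-1)"
      by (simp add: P_def fls_times_fps_to_fls fps_to_fls_power f_def fls_deriv_fps_to_fls)
    ultimately have "fps_to_fls (P k) * iF^n = fls_const (c k * of_nat k) * (fls_deriv f * iF^(n-k+1))"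
      by (simp only: mult.assoc)
    hence "fls_residue (fps_to_fls (P k) * iF^n) = (c k * of_nat k) * fls_residue (fls_deriv f * iF^(n-k+1))"
      by (simp only: fls_residue_fls_const_times)
    also have "\<dots> = (if k = n then c n * of_nat n else 0)"
      using res_lemma[OF sdf, of "n-k+1"] k False by (auto simp: iF_def)
    finally show ?thesis .
  qed
  have R1: "fls_residue (fls_const (of_nat m) * fls_X^(m-1) * iF^n) = c n * of_nat n"
  proof -
    have "fls_residue (fls_const (of_nat m) * fls_X^(m-1) * iF^n) = (\<Sum>k=0..n. fls_residue (fps_to_fls (P k) * iF^n))"
      unfolding L fls_residue_add fls_residue_sum by simp
    also have "\<dots> = (\<Sum>k=0..n. (if k = n then c n * of_nat n else 0))"
      by (rule sum.cong) (use Pk in auto)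
    finally show ?thesis by simp
  qed
  define G where "G = fps_shift 1 F"
  have FG: "F = G * fps_X" using fps_shift_times_fps_X_power[of 1 F] sdF by (simp add: G_def)
  have G0: "G $ 0 \<noteq> 0" using F1 by (simp add: G_def)
  have sdG: "subdegree G = 0" using G0 by simp
  have iFe: "iF = fps_to_fls (inverse G) * fls_X_inv"
    unfolding iF_def f_def FG
    by (simp add: fls_times_fps_to_fls fls_inverse_fps_to_fls[OF sdG] fls_inverse_X)
  have "iF^n = fls_X_inv^n * fps_to_fls (inverse G ^ n)"
    unfolding iFe by (simp add: power_mult_distrib fps_to_fls_power mult.commute)
  hence "fls_X^(m-1) * iF^n = fls_shift (-int (m-1)) (fls_shift (int n) (fps_to_fls (inverse G ^ n)))"
    by (simp add: fls_X_power_times_conv_shift fls_X_inv_power_times_conv_shift)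
  hence sh: "fls_X^(m-1) * iF^n = fls_shift (int n - int (m-1)) (fps_to_fls (inverse G ^ n))"
    by simp
  have ix: "-1 + (int n - int (m-1)) = int (n - m)" using m n by simp
  have "fls_residue (fls_X^(m-1) * iF^n) = (inverse G ^ n) $ (n - m)"
    unfolding sh fls_residue_def fls_shift_nth ix fps_to_fls_nth by simp
  hence R2: "fls_residue (fls_const (of_nat m) * fls_X^(m-1) * iF^n)
      = of_nat m * (inverse G ^ n) $ (n - m)"
    by (simp only: mult.assoc fls_residue_fls_const_times)
  show ?thesis using R1 R2 by (simp add: c_def G_def mult.commute)
qed



lemma inv_power_compose:
  fixes G :: "'a::field_char_0 fps"
  assumes G0: "G$0 \<noteq> 0"
  defines "H \<equiv> fps_const (inverse (G$0)) * G - 1"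
  shows "inverse G ^ n = fps_const (inverse (G$0) ^ n) * (fps_binomial (- of_nat n) oo H)"
proof -
  define a where "a = G$0"
  have H0: "H$0 = 0" using G0 by (simp add: H_def)
  have GH: "G = fps_const a * (1 + H)" using G0 by (simp add: H_def a_def algebra_simps)
  have "fps_binomial (- of_nat n) oo H = inverse ((1 + fps_X)^n) oo H"
    by (simp add: fps_binomial_minus_of_nat)
  also have "\<dots> = inverse (((1 + fps_X)^n) oo H)"
    by (rule fps_inverse_compose[OF H0]) simp
  also have "((1 + fps_X)^n) oo H = (1 + H)^n"
    by (simp add: fps_compose_power[OF H0, symmetric] fps_compose_add_distrib H0)
  finally have B: "fps_binomial (- of_nat n) oo H = inverse ((1 + H)^n)" .
  have "inverse G ^ n = (inverse (fps_const a) * inverse (1+H)) ^ n"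
    by (simp add: GH fps_inverse_mult)
  also have "\<dots> = fps_const (inverse a ^ n) * inverse ((1+H)^n)"
    by (simp add: power_mult_distrib fps_inverse_power fps_const_inverse[symmetric] fps_const_power[symmetric]
        del: fps_const_power)
  finally show ?thesis using B by (simp add: a_def)
qed

lemma Hpow_nth:
  fixes G :: "'a::field_char_0 fps"
  shows "((fps_const c * G - 1)^k)$d = (\<Sum>j\<le>k. of_nat (k choose j) * (-1)^(k-j) * c^j * (G^j)$d)"
proof -
  have "(fps_const c * G - 1)^k = (fps_const c * G + (-1))^k" by simp
  also have "\<dots> = (\<Sum>j\<le>k. of_nat (k choose j) * (fps_const c * G)^j * (-1)^(k-j))"
    by (rule binomial_ring)
  also have "\<dots> = (\<Sum>j\<le>k. fps_const (of_nat (k choose j) * (-1)^(k-j) * c^j) * G^j)"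
  proof (rule sum.cong[OF refl])
    fix j
    have m1: "(-1::'a fps) = fps_const (-1)" by simp
    show "of_nat (k choose j) * (fps_const c * G)^j * (-1)^(k-j) = fps_const (of_nat (k choose j) * (-1)^(k-j) * c^j) * G^j"
      unfolding m1 fps_of_nat[symmetric] power_mult_distrib fps_const_power
      by (simp only: fps_const_mult[symmetric] mult_ac)
  qed
  finally show ?thesis by (simp add: fps_sum_nth)
qed

lemma sign_lemma: "j \<le> k \<Longrightarrow> (-1::'a::comm_ring_1)^k * (-1)^(k-j) = (-1)^j"
proof -
  assume "j \<le> k"
  hence "k + (k-j) = j + 2*(k-j)" by simp
  hence "(-1::'a)^k * (-1)^(k-j) = (-1)^(j + 2*(k-j))" by (metis power_add)
  also have "\<dots> = (-1)^j" by (simp add: power_add power_mult)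
  finally show ?thesis .
qed

lemma inv_coeff:
  fixes G :: "'a::field_char_0 fps"
  assumes G0: "G$0 \<noteq> 0" and n: "n \<ge> 1"
  shows "(inverse G ^ n) $ d = inverse (G$0)^n * (\<Sum>k=0..d. of_nat ((n+k-1) choose (n-1)) *
     (\<Sum>j=0..k. (-1)^j * inverse (G$0)^j * of_nat (k choose j) * (G^j)$d))"
proof -
  define a where "a = G$0"
  define H where "H = fps_const (inverse a) * G - 1"
  have "(inverse G ^ n) $ d = inverse a ^ n * (fps_binomial (- of_nat n) oo H) $ d"
    using inv_power_compose[OF G0, of n] by (simp add: a_def H_def)
  also have "(fps_binomial (- of_nat n) oo H) $ d = (\<Sum>k=0..d. ((- of_nat n) gchoose k) * (H^k)$d)"
    by (simp add: fps_compose_nth)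
  also have "\<dots> = (\<Sum>k=0..d. of_nat ((n+k-1) choose (n-1)) *
     (\<Sum>j=0..k. (-1)^j * inverse a^j * of_nat (k choose j) * (G^j)$d))"
  proof (rule sum.cong[OF refl])
    fix k assume "k \<in> {0..d}"
    have g: "((- of_nat n :: 'a) gchoose k) = (-1)^k * of_nat ((n+k-1) choose (n-1))"
    proof -
      have "((- of_nat n :: 'a) gchoose k) = (-1)^k * ((of_nat n + of_nat k - 1) gchoose k)"
        by (rule gbinomial_minus)
      also have "(of_nat n + of_nat k - 1 :: 'a) = of_nat (n+k-1)" using n by simp
      also have "(of_nat (n+k-1) gchoose k :: 'a) = of_nat ((n+k-1) choose k)"
        by (simp add: binomial_gbinomial)
      also have "(n+k-1) choose k = (n+k-1) choose (n-1)"
        using binomial_symmetric[of k "n+k-1"] n by simp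
      finally show ?thesis .
    qed
    have h: "(H^k)$d = (\<Sum>j=0..k. of_nat (k choose j) * (-1)^(k-j) * inverse a^j * (G^j)$d)"
      unfolding H_def Hpow_nth atLeast0AtMost ..
    show "((- of_nat n) gchoose k) * (H^k)$d = of_nat ((n+k-1) choose (n-1)) *
     (\<Sum>j=0..k. (-1)^j * inverse a^j * of_nat (k choose j) * (G^j)$d)"
      unfolding g h sum_distrib_left
      by (rule sum.cong[OF refl]) (auto simp: sign_lemma[symmetric] algebra_simps)
  qed
  finally show ?thesis by (simp add: a_def)
qed



theorem theorem3:
  fixes F A :: "'a::field_char_0 fps" and n m :: nat
  assumes F0: "fps_nth F 0 = 0"
    and F1: "fps_nth F 1 \<noteq> 0"
    and A0: "fps_nth A 0 = 0"
    and inv: "fps_compose F A = fps_X"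
    and m1: "1 \<le> m" and mn: "m \<le> n"
  shows "composita A n m =
    (if n = m then 1 / composita F 1 1 ^ n
     else of_nat m / (of_nat n * composita F 1 1 ^ n) *
       (\<Sum>k=1..n-m. of_nat ((n+k-1) choose (n-1)) *
          (\<Sum>j=1..k. (-1)^j / composita F 1 1 ^ j * of_nat (k choose j)
                        * composita F (n-m+j) j)))"
proof -
  define a where "a = F$1"
  define G where "G = fps_shift 1 F"
  define d where "d = n - m"
  have sdF: "subdegree F = 1" by (rule subdegreeI) (use F0 F1 in auto)
  have FG: "F = G * fps_X" using fps_shift_times_fps_X_power[of 1 F] sdF by (simp add: G_def)
  have G0: "G$0 = a" by (simp add: G_def a_def)
  have a0: "a \<noteq> 0" using F1 by (simp add: a_def)
  have c11: "composita F 1 1 = a" using composita_power[OF F0, of 1 1] by (simp add: a_def)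
  have cA: "composita A n m = (A^m)$n" using composita_power[OF A0] by simp
  have cF: "composita F (d+j) j = (G^j)$d" for j
  proof -
    have "composita F (d+j) j = (G^j * fps_X^j)$(d+j)"
      using composita_power[OF F0] by (simp add: FG power_mult_distrib)
    also have "\<dots> = (G^j)$d" by (simp add: fps_X_power_mult_right_nth)
    finally show ?thesis .
  qed
  have n1: "n \<ge> 1" using m1 mn by simp
  have lag: "of_nat n * (A^m)$n = of_nat m * (inverse G ^ n) $ d"
    using lagrange[OF F0 F1 A0 inv m1 mn] by (simp add: G_def d_def)
  hence An: "(A^m)$n = of_nat m / of_nat n * (inverse G ^ n) $ d"
    using n1 by (simp add: field_simps)
  show ?thesis
  proof (cases "n = m")
    case True
    have "(inverse G ^ n) $ 0 = inverse a ^ n" by (simp add: fps_nth_power_0 G0)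
    then show ?thesis using True An n1 a0 unfolding cA c11 by (simp add: d_def power_inverse divide_inverse)
  next
    case False
    have d1: "d \<ge> 1" using False mn by (simp add: d_def)
    have IC: "(inverse G ^ n) $ d = inverse a^n * (\<Sum>k=0..d. of_nat ((n+k-1) choose (n-1)) *
     (\<Sum>j=0..k. (-1)^j * inverse a^j * of_nat (k choose j) * (G^j)$d))"
      using inv_coeff[of G n d] G0 a0 n1 by simp
    have inner: "(\<Sum>j=0..k. (-1)^j * inverse a^j * of_nat (k choose j) * (G^j)$d)
        = (\<Sum>j=1..k. (-1)^j / a^j * of_nat (k choose j) * composita F (d+j) j)" for k
    proof -
      have "(\<Sum>j=0..k. (-1)^j * inverse a^j * of_nat (k choose j) * (G^j)$d)
         = (\<Sum>j=1..k. (-1)^j * inverse a^j * of_nat (k choose j) * (G^j)$d)"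
        using d1 by (simp add: sum.atLeast_Suc_atMost)
      also have "\<dots> = (\<Sum>j=1..k. (-1)^j / a^j * of_nat (k choose j) * composita F (d+j) j)"
        by (simp add: cF power_inverse divide_inverse)
      finally show ?thesis .
    qed
    have outer: "(\<Sum>k=0..d. of_nat ((n+k-1) choose (n-1)) *
     (\<Sum>j=1..k. (-1)^j / a^j * of_nat (k choose j) * composita F (d+j) j))
     = (\<Sum>k=1..d. of_nat ((n+k-1) choose (n-1)) *
     (\<Sum>j=1..k. (-1)^j / a^j * of_nat (k choose j) * composita F (d+j) j))"
      by (simp add: sum.atLeast_Suc_atMost)
    show ?thesis using False
      unfolding cA An IC inner outer c11 d_def[symmetric]
      by (simp add: power_inverse divide_inverse mult_ac)
  qed
qed

end
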